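(* Let $X$ be a uniformly convex Banach space and $Y$ a finite-dimensional Banach space. Then the pair $(X,Y)$ has the sBPBp.
   Context: All Banach spaces are over $\mathbb{K}=\mathbb{R}$ or $\mathbb{C}$. $S_X$ denotes the unit sphere of $X$ and $\mathcal{L}(X,Y)$ the space of bounded linear operators from $X$ to $Y$ with the operator norm. A pair of Banach spaces $(X,Y)$ has the strong Bishop–Phelps–Bollobás property (sBPBp) if for every $\varepsilon>0$ and every $T\in\mathcal{L}(X,Y)$ with $\|T\|=1$ there exists $\eta=\eta(\varepsilon,T)>0$ such that whenever $x_0\in S_X$ satisfies $\|T(x_0)\|>1-\eta$, there exists $x_1\in S_X$ with $\|T(x_1)\|=1$ and $\|x_1-x_0\|<\varepsilon$. *)

theory Defs
  imports "HOL-Analysis.Analysis"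
begin

definition uniformly_convex :: "'a::real_normed_vector itself \<Rightarrow> bool" where
  "uniformly_convex _ \<longleftrightarrow>
     (\<forall>\<epsilon>>0. \<exists>\<delta>>0. \<forall>x y::'a. norm x = 1 \<and> norm y = 1 \<and> norm (x - y) \<ge> \<epsilon>
        \<longrightarrow> norm ((1/2) *\<^sub>R (x + y)) \<le> 1 - \<delta>)"

definition finite_dim :: "'a::real_vector itself \<Rightarrow> bool" where
  "finite_dim _ \<longleftrightarrow> (\<exists>B::'a set. finite B \<and> span B = UNIV)"

definition sBPBp :: "'a::real_normed_vector itself \<Rightarrow> 'b::real_normed_vector itself \<Rightarrow> bool" where
  "sBPBp _ _ \<longleftrightarrow>
     (\<forall>\<epsilon>>0. \<forall>T::'a \<Rightarrow> 'b. bounded_linear T \<and> onorm T = 1 \<longrightarrow>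
        (\<exists>\<eta>>0. \<forall>x0::'a. norm x0 = 1 \<and> norm (T x0) > 1 - \<eta> \<longrightarrow>
           (\<exists>x1::'a. norm x1 = 1 \<and> norm (T x1) = 1 \<and> norm (x1 - x0) < \<epsilon>)))"

end

theory Submission
  imports Defs
begin

lemma fd_bw:
  fixes S :: "'b::real_normed_vector set"
  assumes "finite S"
  shows "\<forall>f::nat\<Rightarrow>'b. (\<forall>n. f n \<in> span S) \<and> bounded (range f) \<longrightarrow>
           (\<exists>l\<in>span S. \<exists>r. strict_mono r \<and> (f \<circ> r) \<longlonglongrightarrow> l)"
  using assms
proof (induction S rule: finite_induct)
  case empty
  show ?case
  proof (intro allI impI)
    fix f :: "nat \<Rightarrow> 'b" assume "(\<forall>n. f n \<in> span {}) \<and> bounded (range f)"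
    then have "\<forall>n. f n = 0" by simp
    then have "(f \<circ> id) \<longlonglongrightarrow> 0" by (simp add: o_def)
    then show "\<exists>l\<in>span {}. \<exists>r. strict_mono r \<and> (f \<circ> r) \<longlonglongrightarrow> l"
      by (intro bexI[of _ 0] exI[of _ id]) (auto simp: strict_mono_def)
  qed
next
  case (insert a S)
  have closedS: "closed (span S)"
    unfolding closed_sequential_limits
  proof (intro allI impI)
    fix x l assume h: "(\<forall>n. x n \<in> span S) \<and> x \<longlonglongrightarrow> l"
    then have "bounded (range x)" using convergent_imp_bounded by blast
    then obtain l' r where "l' \<in> span S" "strict_mono r" "(x\<circ>r) \<longlonglongrightarrow> l'"
      using insert.IH h by blast
    moreover have "(x\<circ>r) \<longlonglongrightarrow> l" using h LIMSEQ_subseq_LIMSEQ \<open>strict_mono r\<close> by blast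
    ultimately show "l \<in> span S" using LIMSEQ_unique by metis
  qed
  show ?case
  proof (cases "a \<in> span S")
    case True
    then have "span (insert a S) = span S" using span_redundant by blast
    then show ?thesis using insert.IH by simp
  next
    case False
    define d where "d = infdist a (span S)"
    have d: "d > 0" using infdist_pos_not_in_closed[OF closedS _ False] span_zero d_def by blast
    show ?thesis
    proof (intro allI impI)
      fix f :: "nat \<Rightarrow> 'b" assume hf: "(\<forall>n. f n \<in> span (insert a S)) \<and> bounded (range f)"
      then have "\<forall>n. \<exists>t. f n - t *\<^sub>R a \<in> span S" using span_insert by blast
      then obtain t where t: "\<And>n. f n - t n *\<^sub>R a \<in> span S" by metis
      define z where "z n = f n - t n *\<^sub>R a" for n
      from hf obtain M where "\<forall>x\<in>range f. norm x \<le> M" unfolding bounded_iff by blast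
      then have M: "\<And>n. norm (f n) \<le> M" by auto
      have tb: "\<bar>t n\<bar> * d \<le> norm (f n)" for n
      proof (cases "t n = 0")
        case True then show ?thesis using d by simp
      next
        case False
        have eq: "(1/t n) *\<^sub>R z n = (1/t n) *\<^sub>R f n - a"
          using False by (simp add: z_def scaleR_diff_right)
        have "(- (1/t n)) *\<^sub>R z n \<in> span S" using t[of n] unfolding z_def by (rule span_scale)
        then have "d \<le> dist a ((- (1/t n)) *\<^sub>R z n)" unfolding d_def by (rule infdist_le)
        also have "dist a ((- (1/t n)) *\<^sub>R z n) = norm (a + (1/t n) *\<^sub>R z n)"
          by (simp add: dist_norm)
        also have "\<dots> = norm ((1/t n) *\<^sub>R f n)" by (simp add: eq)
        also have "\<dots> = norm (f n) / \<bar>t n\<bar>" by simp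
        finally show ?thesis using False by (simp add: field_simps)
      qed
      have tM: "\<bar>t n\<bar> \<le> M / d" for n using tb[of n] M[of n] d by (simp add: field_simps)
      have "bounded (range t)" unfolding bounded_iff using tM by auto
      then obtain tt r1 where r1: "strict_mono r1" "(t \<circ> r1) \<longlonglongrightarrow> tt"
        using bounded_imp_convergent_subsequence by blast
      have zM: "norm (z n) \<le> M + M / d * norm a" for n
      proof -
        have "norm (z n) \<le> norm (f n) + \<bar>t n\<bar> * norm a" unfolding z_def
          using norm_triangle_ineq4[of "f n" "t n *\<^sub>R a"] by simp
        also have "\<dots> \<le> M + M / d * norm a"
          using M[of n] tM[of n] by (intro add_mono mult_right_mono) auto
        finally show ?thesis .
      qed
      have "\<forall>n. (z \<circ> r1) n \<in> span S" using t z_def by simp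
      moreover have "bounded (range (z \<circ> r1))" unfolding bounded_iff using zM by auto
      ultimately obtain zz r2 where zz: "zz \<in> span S" "strict_mono r2" "(z \<circ> r1 \<circ> r2) \<longlonglongrightarrow> zz"
        using insert.IH by blast
      have tt2: "(t \<circ> r1 \<circ> r2) \<longlonglongrightarrow> tt" using LIMSEQ_subseq_LIMSEQ[OF r1(2) zz(2)] .
      have "(\<lambda>n. (t \<circ> r1 \<circ> r2) n *\<^sub>R a + (z \<circ> r1 \<circ> r2) n) \<longlonglongrightarrow> tt *\<^sub>R a + zz"
        by (intro tendsto_intros tt2 zz(3))
      then have "(f \<circ> (r1 \<circ> r2)) \<longlonglongrightarrow> tt *\<^sub>R a + zz" by (simp add: z_def o_def)
      moreover have "strict_mono (r1 \<circ> r2)" using r1 zz by (simp add: strict_mono_o)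
      moreover have "tt *\<^sub>R a + zz \<in> span (insert a S)"
      proof -
        have "tt *\<^sub>R a \<in> span (insert a S)" by (intro span_scale span_base) simp
        moreover have "zz \<in> span (insert a S)" using span_mono[of S "insert a S"] zz(1) by blast
        ultimately show ?thesis by (rule span_add)
      qed
      ultimately show "\<exists>l\<in>span (insert a S). \<exists>r. strict_mono r \<and> (f \<circ> r) \<longlonglongrightarrow> l" by blast
    qed
  qed
qed

theorem mainTheorem4:
  assumes "uniformly_convex TYPE('a::banach)"
    and "finite_dim TYPE('b::banach)"
  shows "sBPBp TYPE('a) TYPE('b)"
proof -
  obtain B :: "'b set" where B: "finite B" "span B = UNIV"
    using assms(2) unfolding finite_dim_def by blast
  note BW = fd_bw[OF B(1), unfolded B(2)]
  have UC: "\<exists>\<delta>>0. \<forall>x y::'a. norm x = 1 \<and> norm y = 1 \<and> norm (x - y) \<ge> e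
        \<longrightarrow> norm ((1/2) *\<^sub>R (x + y)) \<le> 1 - \<delta>" if "e > 0" for e
    using assms(1) that unfolding uniformly_convex_def by blast
  show ?thesis
    unfolding sBPBp_def
  proof (intro allI impI)
    fix \<epsilon> :: real and T :: "'a \<Rightarrow> 'b"
    assume eps: "\<epsilon> > 0" and TT: "bounded_linear T \<and> onorm T = 1"
    from TT have T: "bounded_linear T" "onorm T = 1" by auto
    show "\<exists>\<eta>>0. \<forall>x0. norm x0 = 1 \<and> norm (T x0) > 1 - \<eta> \<longrightarrow>
           (\<exists>x1. norm x1 = 1 \<and> norm (T x1) = 1 \<and> norm (x1 - x0) < \<epsilon>)"
    proof (rule ccontr)
    assume nH: "\<not> (\<exists>\<eta>>0. \<forall>x0. norm x0 = 1 \<and> norm (T x0) > 1 - \<eta> \<longrightarrow>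
           (\<exists>x1. norm x1 = 1 \<and> norm (T x1) = 1 \<and> norm (x1 - x0) < \<epsilon>))"
    have H: "\<forall>\<eta>>0. \<exists>x0. norm x0 = 1 \<and> norm (T x0) > 1 - \<eta> \<and>
            (\<forall>x1. norm x1 = 1 \<and> norm (T x1) = 1 \<longrightarrow> \<not> norm (x1 - x0) < \<epsilon>)"
    proof (intro allI impI)
      fix \<eta> :: real assume "\<eta> > 0"
      with nH obtain x0 where "\<not> (norm x0 = 1 \<and> norm (T x0) > 1 - \<eta> \<longrightarrow>
           (\<exists>x1. norm x1 = 1 \<and> norm (T x1) = 1 \<and> norm (x1 - x0) < \<epsilon>))" by blast
      then show "\<exists>x0. norm x0 = 1 \<and> norm (T x0) > 1 - \<eta> \<and>
            (\<forall>x1. norm x1 = 1 \<and> norm (T x1) = 1 \<longrightarrow> \<not> norm (x1 - x0) < \<epsilon>)" by blast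
    qed
    have Tle: "norm (T v) \<le> norm v" for v using onorm[OF T(1), of v] T(2) by simp
    have "\<forall>n::nat. \<exists>x0. norm x0 = 1 \<and> norm (T x0) > 1 - 1 / real (Suc n) \<and>
            (\<forall>x1. norm x1 = 1 \<and> norm (T x1) = 1 \<longrightarrow> \<not> norm (x1 - x0) < \<epsilon>)"
      using H by simp
    then obtain x where xP: "\<forall>n::nat. norm (x n) = 1 \<and> norm (T (x n)) > 1 - 1 / real (Suc n) \<and>
            (\<forall>x1. norm x1 = 1 \<and> norm (T x1) = 1 \<longrightarrow> \<not> norm (x1 - x n) < \<epsilon>)"
      using choice[of "\<lambda>n x0. norm x0 = 1 \<and> norm (T x0) > 1 - 1 / real (Suc n) \<and>
            (\<forall>x1. norm x1 = 1 \<and> norm (T x1) = 1 \<longrightarrow> \<not> norm (x1 - x0) < \<epsilon>)"] by blast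
    have x1: "\<And>n. norm (x n) = 1" and x2: "\<And>n. norm (T (x n)) > 1 - 1 / real (Suc n)"
      and x3: "\<And>n x1. norm x1 = 1 \<Longrightarrow> norm (T x1) = 1 \<Longrightarrow> \<not> norm (x1 - x n) < \<epsilon>"
      using xP by auto
    have Tx1: "norm (T (x n)) \<le> 1" for n using Tle[of "x n"] x1[of n] by simp
    have "bounded (range (\<lambda>n. T (x n)))" unfolding bounded_iff
      using Tx1 by (intro exI[of _ 1]) auto
    then obtain y r where r: "strict_mono r" and ry: "((\<lambda>n. T (x n)) \<circ> r) \<longlonglongrightarrow> y"
      using BW by blast
    define u where "u = x \<circ> r"
    have u1: "norm (u n) = 1" for n using x1 u_def by simp
    have Tu: "(\<lambda>n. T (u n)) \<longlonglongrightarrow> y" using ry by (simp add: u_def o_def)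
    have lim1: "(\<lambda>n. 1 - 1 / real (Suc n)) \<longlonglongrightarrow> 1"
      using tendsto_diff[OF tendsto_const LIMSEQ_inverse_real_of_nat, of 1]
      by (simp add: inverse_eq_divide)
    then have lim1r: "(\<lambda>n. 1 - 1 / real (Suc (r n))) \<longlonglongrightarrow> 1"
      using LIMSEQ_subseq_LIMSEQ[OF lim1 r] by (simp add: o_def)
    have "(\<lambda>n. norm (T (u n))) \<longlonglongrightarrow> 1"
    proof (rule tendsto_sandwich[OF _ _ lim1r tendsto_const])
      show "\<forall>\<^sub>F n in sequentially. 1 - 1 / real (Suc (r n)) \<le> norm (T (u n))"
        using x2 by (simp add: u_def less_imp_le)
      show "\<forall>\<^sub>F n in sequentially. norm (T (u n)) \<le> 1"
        using Tx1 by (simp add: u_def)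
    qed
    moreover have "(\<lambda>n. norm (T (u n))) \<longlonglongrightarrow> norm y" using Tu by (rule tendsto_norm)
    ultimately have ny: "norm y = 1" using LIMSEQ_unique by metis
    have "Cauchy u"
    proof (rule metric_CauchyI)
      fix e :: real assume "e > 0"
      then obtain \<delta> where d: "\<delta> > 0" and dU: "\<And>x y::'a. norm x = 1 \<Longrightarrow> norm y = 1 \<Longrightarrow> norm (x - y) \<ge> e
        \<Longrightarrow> norm ((1/2) *\<^sub>R (x + y)) \<le> 1 - \<delta>" using UC[OF \<open>e > 0\<close>] by blast
      from Tu d obtain M where M: "\<And>n. n \<ge> M \<Longrightarrow> norm (T (u n) - y) < \<delta>"
        unfolding LIMSEQ_iff by blast
      have "dist (u m) (u n) < e" if "m \<ge> M" "n \<ge> M" for m n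
      proof (rule ccontr)
        assume "\<not> dist (u m) (u n) < e"
        then have "norm (u m - u n) \<ge> e" by (simp add: dist_norm)
        then have le: "norm ((1/2) *\<^sub>R (u m + u n)) \<le> 1 - \<delta>" using dU[OF u1 u1] by blast
        have "(1/2) *\<^sub>R (T (u m) + T (u n)) - y = (1/2) *\<^sub>R (T (u m) - y) + (1/2) *\<^sub>R (T (u n) - y)"
          by (simp add: algebra_simps flip: scaleR_add_left)
        then have "norm ((1/2) *\<^sub>R (T (u m) + T (u n)) - y) \<le> (1/2) * norm (T (u m) - y) + (1/2) * norm (T (u n) - y)"
          using norm_triangle_ineq[of "(1/2) *\<^sub>R (T (u m) - y)" "(1/2) *\<^sub>R (T (u n) - y)"] by simp
        also have "\<dots> < \<delta>" using M[OF that(1)] M[OF that(2)] by simp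
        finally have a: "norm ((1/2) *\<^sub>R (T (u m) + T (u n)) - y) < \<delta>" .
        have "norm y \<le> norm ((1/2) *\<^sub>R (T (u m) + T (u n))) + norm ((1/2) *\<^sub>R (T (u m) + T (u n)) - y)"
          using norm_triangle_sub[of y "(1/2) *\<^sub>R (T (u m) + T (u n))"] by (simp add: norm_minus_commute)
        then have "norm ((1/2) *\<^sub>R (T (u m) + T (u n))) > 1 - \<delta>" using a ny by linarith
        moreover have "T ((1/2) *\<^sub>R (u m + u n)) = (1/2) *\<^sub>R (T (u m) + T (u n))"
        proof -
          interpret TL: bounded_linear T by (rule T(1))
          show ?thesis by (simp add: TL.scaleR TL.add)
        qed
        ultimately show False using Tle[of "(1/2) *\<^sub>R (u m + u n)"] le by simp
      qed
      then show "\<exists>M. \<forall>m\<ge>M. \<forall>n\<ge>M. dist (u m) (u n) < e" by blast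
    qed
    then obtain xs where xs: "u \<longlonglongrightarrow> xs" using Cauchy_convergent_iff convergent_def by blast
    have "(\<lambda>n. norm (u n)) \<longlonglongrightarrow> norm xs" using xs by (rule tendsto_norm)
    then have nxs: "norm xs = 1" by (simp add: u1 LIMSEQ_const_iff)
    have "(\<lambda>n. T (u n)) \<longlonglongrightarrow> T xs" using bounded_linear.tendsto[OF T(1) xs] .
    then have "T xs = y" using Tu LIMSEQ_unique by blast
    then have nT: "norm (T xs) = 1" using ny by simp
    from xs eps obtain N where "\<And>n. n \<ge> N \<Longrightarrow> norm (u n - xs) < \<epsilon>"
      unfolding LIMSEQ_iff by blast
    then have "norm (u N - xs) < \<epsilon>" by simp
    moreover have "\<not> norm (xs - u N) < \<epsilon>" using x3[OF nxs nT, of "r N"] by (simp add: u_def)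
    ultimately show False by (simp add: norm_minus_commute)
  qed
  qed
qed

end
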